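(* Let $r\ge1$, $\mathbf{m}\in\mathbb{N}^r$, $m=m_1+\cdots+m_r$, $\mathbf{f}\in\mathbb{C}^r$, $a,b\in\mathbb{C}$, and suppose $(b+1)\,\Pi_1\ne b\,\Pi_0$ and $(b-a+1)\,\Pi_1\ne b\,\Pi_0$, where $\Pi_1=\prod_{i=1}^r(f_i-b-1+m_i)$ and $\Pi_0=\prod_{i=1}^r(f_i-b-1)$. Then for $|x|<1$ $$ (1-x)^{a-1}{}_{r+2}F_{r+1}\!\left(\begin{matrix}a, b,\mathbf{f}+\mathbf{m}\\ b+2,\mathbf{f}\end{matrix}\,\middle|\, x\right) =\frac{(b+1)(\mathbf{f}-b)_{\mathbf{m}}-b(\mathbf{f}-b-1)_{\mathbf{m}}}{(\mathbf{f})_{\mathbf{m}}} {}_{3}F_{2}\!\left(\begin{matrix}1,b+1-a,\lambda^*+1\\ b+2,\lambda^*\end{matrix}\,\middle|\, x\right) +\sum_{l=0}^{m-1}\big[(b+1)Y_l(b,\mathbf{f},\mathbf{m})-bY_l(b+1,\mathbf{f},\mathbf{m})\big]\frac{(a)_lx^l}{(1-x)^{l+1}}, $$ where $$ \lambda^*=(b-a+1)\frac{(b+1)\Pi_1-b\,\Pi_0}{(b-a+1)\Pi_1-b\,\Pi_0}. $$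
   Context: $(a)_k=\Gamma(a+k)/\Gamma(a)$. For vectors: $(\mathbf{f}+\gamma)_{\mathbf{m}}=\prod_i(f_i+\gamma)_{m_i}$, $(\mathbf{f})_n=\prod_i(f_i)_n$, $\mathbf{f}+\mathbf{m}$ componentwise; a vector among hypergeometric parameters means its components are listed. ${}_pF_q(\cdot;\cdot;x)$ is the generalized hypergeometric function. For $\beta\in\mathbb{C}$: $W_{m-1}(\beta,\mathbf{f},\mathbf{m};n)=\frac{\beta((\mathbf{f}+n)_{\mathbf{m}}-(\mathbf{f}-\beta)_{\mathbf{m}})}{(\beta+n)(\mathbf{f})_{\mathbf{m}}}=\sum_{k=0}^{m-1}\delta_k(\beta)n^k$, and $Y_l(\beta,\mathbf{f},\mathbf{m})=\sum_{k=l}^{m-1}\delta_k(\beta)\mathbf{S}_k^{(l)}$ with $\mathbf{S}_k^{(l)}$ Stirling numbers of the second kind. Parameters are assumed such that all expressions are defined. *)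

theory Defs
  imports "HOL-Analysis.Analysis" "HOL-Computational_Algebra.Polynomial"
          "HOL-Combinatorics.Stirling"
begin

definition hyperF :: "complex list \<Rightarrow> complex list \<Rightarrow> complex \<Rightarrow> complex" where
  "hyperF as bs x = (\<Sum>n. (prod_list (map (\<lambda>a. pochhammer a n) as)
        / prod_list (map (\<lambda>c. pochhammer c n) bs)) * x ^ n / fact n)"

definition vpoch :: "nat \<Rightarrow> (nat \<Rightarrow> complex) \<Rightarrow> (nat \<Rightarrow> nat) \<Rightarrow> complex" where
  "vpoch r g m = (\<Prod>i<r. pochhammer (g i) (m i))"

text \<open>W_{m-1}(beta,f,m;n) as a polynomial in n:
  beta((f+n)_m - (f-beta)_m) / ((beta+n)(f)_m); the numerator vanishes at n = -beta,
  so the division by (n + beta) is exact.\<close>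
definition Wpoly :: "nat \<Rightarrow> complex \<Rightarrow> (nat \<Rightarrow> complex) \<Rightarrow> (nat \<Rightarrow> nat) \<Rightarrow> complex poly" where
  "Wpoly r \<beta> f m =
     smult (\<beta> / vpoch r f m)
       (((\<Prod>i<r. \<Prod>j<m i. [:f i + of_nat j, 1:]) - [:vpoch r (\<lambda>i. f i - \<beta>) m:])
          div [:\<beta>, 1:])"

definition delta :: "nat \<Rightarrow> complex \<Rightarrow> (nat \<Rightarrow> complex) \<Rightarrow> (nat \<Rightarrow> nat) \<Rightarrow> nat \<Rightarrow> complex" where
  "delta r \<beta> f m k = coeff (Wpoly r \<beta> f m) k"

definition Y :: "nat \<Rightarrow> nat \<Rightarrow> complex \<Rightarrow> (nat \<Rightarrow> complex) \<Rightarrow> (nat \<Rightarrow> nat) \<Rightarrow> complex" where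
  "Y r l \<beta> f m = (\<Sum>k\<in>{l..<(\<Sum>i<r. m i)}. delta r \<beta> f m k * of_nat (Stirling k l))"

end

theory Submission
  imports Defs "HOL-Computational_Algebra.Formal_Power_Series"
begin

unbundle no vec_syntax
unbundle fps_syntax

definition Bn :: "complex \<Rightarrow> complex fps" where
  "Bn s = Abs_fps (\<lambda>n. pochhammer s n / fact n)"

lemma Bn_nth [simp]: "Bn s $ n = pochhammer s n / fact n"
  by (simp add: Bn_def)

lemma theta_nth: "(fps_X * fps_deriv Z) $ n = of_nat n * Z $ n"
  by (cases n) (simp_all add: algebra_simps)

lemma Bn_shift: "(1 - fps_X) * Bn s = Bn (s - 1)"
proof (rule fps_ext)
  fix n show "((1 - fps_X) * Bn s) $ n = Bn (s - 1) $ n"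
  proof (cases n)
    case 0 then show ?thesis by simp
  next
    case (Suc k)
    have "((1 - fps_X) * Bn s) $ n = pochhammer s (Suc k) / fact (Suc k) - pochhammer s k / fact k"
      using Suc by (simp add: algebra_simps)
    also have "\<dots> = pochhammer s k * (s + of_nat k - of_nat (Suc k)) / fact (Suc k)"
    proof -
      have f: "fact (Suc k) = (of_nat k + 1) * (fact k :: complex)" by simp
      have nz: "(of_nat k + 1 :: complex) \<noteq> 0" by (metis add.commute of_nat_Suc of_nat_neq_0)
      have aux: "\<And>q d x p::complex. q \<noteq> 0 \<Longrightarrow> d \<noteq> 0 \<Longrightarrow> x*p/(q*d) - p/d = p*(x - q)/(q*d)"
        by (simp add: field_simps)
      show ?thesis unfolding f pochhammer_rec' of_nat_Suc using aux[OF nz fact_nonzero] by (simp add: add.commute)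
    qed
    also have "\<dots> = pochhammer (s - 1) (Suc k) / fact (Suc k)"
      by (simp add: pochhammer_rec algebra_simps)
    finally show ?thesis using Suc by simp
  qed
qed

lemma Bn_deriv: "fps_deriv (Bn s) = fps_const s * Bn (s + 1)"
proof (rule fps_ext)
  fix n
  have "fps_deriv (Bn s) $ n = of_nat (Suc n) * (s * pochhammer (s+1) n) / (of_nat (Suc n) * fact n)"
    by (simp add: pochhammer_rec)
  also have "\<dots> = s * pochhammer (s+1) n / fact n"
    by (simp del: of_nat_Suc)
  finally show "fps_deriv (Bn s) $ n = (fps_const s * Bn (s + 1)) $ n" by simp
qed

lemma Bn_mult: "Bn s * Bn t = Bn (s + t)"
proof (rule fps_ext)
  fix n
  have "(Bn s * Bn t) $ n = (\<Sum>k=0..n. ((-s) gchoose k) * ((-t) gchoose (n-k))) * (-1)^n"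
    unfolding fps_mult_nth sum_distrib_right
  proof (rule sum.cong[OF refl])
    fix k assume "k \<in> {0..n}"
    then have "(-1::complex)^n = (-1)^k * (-1)^(n-k)"
      by (simp add: power_add[symmetric])
    have e: "\<And>j. (-1::complex)^j * (-1)^j = 1" by (simp add: power_mult_distrib[symmetric])
    have "((-s) gchoose k) * ((-t) gchoose (n-k)) * (-1)^n
       = ((-1)^k * (-1)^k) * ((-1)^(n-k) * (-1)^(n-k)) * (pochhammer s k / fact k * (pochhammer t (n-k) / fact (n-k)))"
      unfolding \<open>(-1::complex)^n = _\<close> gbinomial_pochhammer minus_minus by (simp only: mult_ac times_divide_eq_left times_divide_eq_right)
    then show "Bn s $ k * Bn t $ (n - k) = ((-s) gchoose k) * ((-t) gchoose (n-k)) * (-1)^n"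
      by (simp only: e mult_1_left Bn_nth)
  qed
  also have "\<dots> = ((-(s+t)) gchoose n) * (-1)^n"
    by (simp add: gbinomial_Vandermonde)
  also have "\<dots> = ((-1)^n * (-1)^n) * (pochhammer (s+t) n / fact n)"
    by (simp add: gbinomial_pochhammer add.commute)
  also have "\<dots> = Bn (s+t) $ n"
    by (simp add: power_mult_distrib[symmetric])
  finally show "(Bn s * Bn t) $ n = Bn (s + t) $ n" .
qed

definition Tser :: "complex \<Rightarrow> complex \<Rightarrow> complex fps" where
  "Tser a \<beta> = Abs_fps (\<lambda>n. pochhammer a n / fact n * (pochhammer \<beta> n / pochhammer (\<beta>+1) n))"

definition User :: "complex \<Rightarrow> complex \<Rightarrow> complex fps" where
  "User a \<beta> = Abs_fps (\<lambda>n. pochhammer (\<beta>+1-a) n / pochhammer (\<beta>+1) n)"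

lemma Tser_nth [simp]: "Tser a \<beta> $ n = pochhammer a n / fact n * (pochhammer \<beta> n / pochhammer (\<beta>+1) n)"
  by (simp add: Tser_def)

lemma User_nth [simp]: "User a \<beta> $ n = pochhammer (\<beta>+1-a) n / pochhammer (\<beta>+1) n"
  by (simp add: User_def)

lemma poch_nz: "(\<And>n. c \<noteq> - of_nat n) \<Longrightarrow> pochhammer (c::complex) k \<noteq> 0"
  by (auto simp: pochhammer_eq_0_iff)

lemma Tser_eq:
  assumes "\<And>n. \<beta> + 1 \<noteq> - of_nat n"
  shows "fps_X * fps_deriv (Tser a \<beta>) + fps_const \<beta> * Tser a \<beta> = fps_const \<beta> * Bn a"
proof (rule fps_ext)
  fix n
  have nz: "pochhammer (\<beta>+1) n \<noteq> 0" using poch_nz assms by blast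
  have e: "(of_nat n + \<beta>) * pochhammer \<beta> n = \<beta> * pochhammer (\<beta>+1) n"
    using pochhammer_rec'[of \<beta> n] pochhammer_rec[of \<beta> n] by (simp add: add.commute)
  have "(fps_X * fps_deriv (Tser a \<beta>) + fps_const \<beta> * Tser a \<beta>) $ n
      = (of_nat n + \<beta>) * Tser a \<beta> $ n"
    by (simp only: fps_add_nth theta_nth fps_mult_left_const_nth distrib_right)
  also have "\<dots> = (of_nat n + \<beta>) * (pochhammer a n / fact n * (pochhammer \<beta> n / pochhammer (\<beta>+1) n))"
    by simp
  also have "\<dots> = pochhammer a n / fact n * ((of_nat n + \<beta>) * pochhammer \<beta> n / pochhammer (\<beta>+1) n)"
    by simp
  also have "\<dots> = \<beta> * (pochhammer a n / fact n)" unfolding e using nz by simp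
  finally show "(fps_X * fps_deriv (Tser a \<beta>) + fps_const \<beta> * Tser a \<beta>) $ n = (fps_const \<beta> * Bn a) $ n"
    by simp
qed

lemma User_eq:
  fixes a :: complex
  assumes "\<And>n. \<beta> + 1 \<noteq> - of_nat n"
  shows "(fps_X * fps_deriv (User a \<beta>) + fps_const \<beta> * User a \<beta>) - fps_X * (fps_X * fps_deriv (User a \<beta>) + fps_const \<beta> * User a \<beta>) + fps_const (a - 1) * (fps_X * User a \<beta>) = fps_const \<beta>"
    (is "?G - fps_X * ?G + _ = _")
proof (rule fps_ext)
  fix n
  define G where "G = ?G"
  have Gn: "G $ k = (of_nat k + \<beta>) * User a \<beta> $ k" for k
    unfolding G_def by (simp only: fps_add_nth theta_nth fps_mult_left_const_nth distrib_right)
  have "(G - fps_X * G + fps_const (a - 1) * (fps_X * User a \<beta>)) $ n = fps_const \<beta> $ n"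
  proof (cases n)
    case 0 then show ?thesis by (simp add: Gn User_def)
  next
    case (Suc k)
    have nz: "pochhammer (\<beta>+1) k \<noteq> 0" using poch_nz assms by blast
    have nz2: "\<beta> + 1 + of_nat k \<noteq> 0"
    proof
      assume "(\<beta> + 1) + of_nat k = 0"
      then have "\<beta> + 1 = - of_nat k" by (simp add: eq_neg_iff_add_eq_0)
      then show False using assms[of k] by simp
    qed
    have aux: "\<And>d x p q::complex. d \<noteq> 0 \<Longrightarrow> q \<noteq> 0 \<Longrightarrow> d * (x * p / (d * q)) = x * (p / q)"
      by (simp add: field_simps)
    have e1: "of_nat (Suc k) + \<beta> = \<beta> + 1 + of_nat k" by simp
    have U1: "User a \<beta> $ Suc k = (\<beta> + 1 - a + of_nat k) * pochhammer (\<beta>+1-a) k / ((\<beta> + 1 + of_nat k) * pochhammer (\<beta>+1) k)"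
      by (simp add: pochhammer_rec')
    have key: "(of_nat (Suc k) + \<beta>) * User a \<beta> $ Suc k = (\<beta> + 1 - a + of_nat k) * User a \<beta> $ k"
      unfolding e1 U1 using aux[OF nz2 nz] by simp
    have "(G - fps_X * G + fps_const (a - 1) * (fps_X * User a \<beta>)) $ n
        = G $ Suc k - G $ k + (a - 1) * User a \<beta> $ k" using Suc by simp
    also have "\<dots> = (\<beta> + 1 - a + of_nat k) * User a \<beta> $ k - (of_nat k + \<beta>) * User a \<beta> $ k + (a - 1) * User a \<beta> $ k"
      unfolding Gn key ..
    also have "\<dots> = 0"
    proof -
      have "\<And>u::complex. (\<beta> + 1 - a + of_nat k) * u - (of_nat k + \<beta>) * u + (a - 1) * u = 0"
        by (simp add: algebra_simps)
      then show ?thesis by blast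
    qed
    finally show ?thesis using Suc by simp
  qed
  then show "(?G - fps_X * ?G + fps_const (a - 1) * (fps_X * User a \<beta>)) $ n = fps_const \<beta> $ n"
    unfolding G_def .
qed

lemma Euler_T:
  assumes "\<And>n. \<beta> + 1 \<noteq> - of_nat n"
  shows "Tser a \<beta> = Bn (a - 1) * User a \<beta>"
proof -
  define U where "U = User a \<beta>"
  define G where "G = fps_X * fps_deriv U + fps_const \<beta> * U"
  define Z where "Z = Tser a \<beta> - Bn (a - 1) * U"
  have UG: "G - fps_X * G + fps_const (a - 1) * (fps_X * U) = fps_const \<beta>"
    using User_eq[OF assms] unfolding G_def U_def by simp
  have "fps_X * fps_deriv (Bn (a - 1) * U) + fps_const \<beta> * (Bn (a - 1) * U)
      = Bn a * ((1 - fps_X) * G + fps_const (a - 1) * (fps_X * U))"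
  proof -
    have d: "fps_deriv (Bn (a - 1)) = fps_const (a - 1) * Bn a" using Bn_deriv[of "a - 1"] by simp
    show ?thesis unfolding G_def fps_deriv_mult d
      unfolding Bn_shift[of a, symmetric] by (simp add: algebra_simps)
  qed
  also have "(1 - fps_X) * G + fps_const (a - 1) * (fps_X * U) = fps_const \<beta>"
    using UG by (simp add: algebra_simps)
  finally have "fps_X * fps_deriv Z + fps_const \<beta> * Z = 0"
    unfolding Z_def using Tser_eq[OF assms, of a] by (simp add: algebra_simps fps_deriv_mult)
  hence zn: "(of_nat n + \<beta>) * Z $ n = 0" for n
  proof -
    assume h: "fps_X * fps_deriv Z + fps_const \<beta> * Z = 0"
    have "(fps_X * fps_deriv Z + fps_const \<beta> * Z) $ n = 0" using h by simp
    then show ?thesis by (simp only: fps_add_nth theta_nth fps_mult_left_const_nth distrib_right fps_zero_nth)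
  qed
  have "Z $ n = 0" for n
  proof (cases n)
    case 0 then show ?thesis by (simp add: Z_def Tser_def U_def User_def fps_mult_nth)
  next
    case (Suc k)
    have e: "of_nat n + \<beta> = (\<beta> + 1) + of_nat k" using Suc by simp
    have "(\<beta> + 1) + of_nat k \<noteq> 0"
    proof
      assume "(\<beta> + 1) + of_nat k = 0"
      then have "\<beta> + 1 = - of_nat k" by (simp add: eq_neg_iff_add_eq_0)
      then show False using assms[of k] by simp
    qed
    then have "of_nat n + \<beta> \<noteq> 0" unfolding e .
    then show ?thesis using zn[of n] by simp
  qed
  then have "Z = 0" by (intro fps_ext) simp
  then show ?thesis unfolding Z_def U_def by simp
qed


definition Pp :: "nat \<Rightarrow> (nat \<Rightarrow> complex) \<Rightarrow> (nat \<Rightarrow> nat) \<Rightarrow> complex poly" where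
  "Pp r f m = (\<Prod>i<r. \<Prod>j<m i. [:f i + of_nat j, 1:])"

lemma poly_Pp: "poly (Pp r f m) z = vpoch r (\<lambda>i. f i + z) m"
  unfolding Pp_def vpoch_def poly_prod pochhammer_prod
  by (intro prod.cong refl) (auto simp: atLeast0LessThan algebra_simps)

lemma degree_Pp: "degree (Pp r f m) \<le> (\<Sum>i<r. m i)"
proof -
  have "degree (Pp r f m) \<le> (\<Sum>i<r. degree (\<Prod>j<m i. [:f i + of_nat j, 1:]))"
    unfolding Pp_def using degree_prod_sum_le[of "{..<r}"] by (simp add: o_def)
  also have "\<dots> \<le> (\<Sum>i<r. m i)"
  proof (rule sum_mono)
    fix i
    have "degree (\<Prod>j<m i. [:f i + of_nat j, 1:]) \<le> (\<Sum>j<m i. degree [:f i + of_nat j, 1:])"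
      using degree_prod_sum_le[of "{..<m i}" "\<lambda>j. [:f i + of_nat j, 1:]"] by (simp add: o_def)
    also have "\<dots> = m i" by simp
    finally show "degree (\<Prod>j<m i. [:f i + of_nat j, 1:]) \<le> m i" .
  qed
  finally show ?thesis .
qed

lemma Wpoly_facts:
  assumes V: "vpoch r f m \<noteq> 0"
  shows "(z + \<beta>) * poly (Wpoly r \<beta> f m) z
           = \<beta> * (vpoch r (\<lambda>i. f i + z) m - vpoch r (\<lambda>i. f i - \<beta>) m) / vpoch r f m"
    and "k \<ge> (\<Sum>i<r. m i) \<Longrightarrow> coeff (Wpoly r \<beta> f m) k = 0"
proof -
  define c where "c = vpoch r (\<lambda>i. f i - \<beta>) m"
  define N where "N = Pp r f m - [:c:]"
  define D where "D = N div [:\<beta>, 1:]"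
  have W: "Wpoly r \<beta> f m = smult (\<beta> / vpoch r f m) D"
    unfolding Wpoly_def D_def N_def c_def Pp_def ..
  have "poly N (-\<beta>) = 0"
    unfolding N_def c_def by (simp add: poly_Pp)
  then have "[:\<beta>, 1:] dvd N" using poly_eq_0_iff_dvd[of N "-\<beta>"] by simp
  then have ND: "N = D * [:\<beta>, 1:]" unfolding D_def by (rule dvd_div_mult_self[symmetric])
  have "(z + \<beta>) * poly (Wpoly r \<beta> f m) z = \<beta> / vpoch r f m * poly N z"
    unfolding W by (subst ND) (simp add: algebra_simps add_divide_distrib)
  also have "\<dots> = \<beta> * (vpoch r (\<lambda>i. f i + z) m - c) / vpoch r f m"
    unfolding N_def by (simp add: poly_Pp)
  finally show "(z + \<beta>) * poly (Wpoly r \<beta> f m) z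
           = \<beta> * (vpoch r (\<lambda>i. f i + z) m - vpoch r (\<lambda>i. f i - \<beta>) m) / vpoch r f m"
    unfolding c_def .
  assume k: "k \<ge> (\<Sum>i<r. m i)"
  have "coeff D k = 0"
  proof (cases "D = 0")
    case True then show ?thesis by simp
  next
    case False
    have "degree N = degree D + 1" unfolding ND using False by (subst degree_mult_eq) auto
    moreover have "degree N \<le> (\<Sum>i<r. m i)"
      unfolding N_def by (rule degree_diff_le[OF degree_Pp]) simp
    ultimately have "degree D < k" using k by simp
    then show ?thesis by (rule coeff_eq_0)
  qed
  then show "coeff (Wpoly r \<beta> f m) k = 0" unfolding W by simp
qed

lemma poly_as_sum_lt:
  fixes p :: "complex poly"
  assumes "\<And>k. k \<ge> M \<Longrightarrow> coeff p k = 0"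
  shows "poly p x = (\<Sum>k<M. coeff p k * x ^ k)"
proof -
  have "poly p x = (\<Sum>k\<le>degree p. coeff p k * x ^ k)" by (rule poly_altdef)
  also have "\<dots> = (\<Sum>k<max M (Suc (degree p)). coeff p k * x ^ k)"
    by (rule sum.mono_neutral_left) (auto simp: coeff_eq_0)
  also have "\<dots> = (\<Sum>k<M. coeff p k * x ^ k)"
    by (rule sum.mono_neutral_right) (auto simp: assms)
  finally show ?thesis .
qed


definition ff :: "complex \<Rightarrow> nat \<Rightarrow> complex" where
  "ff x l = (\<Prod>j<l. (x - of_nat j))"

lemma ff_Suc: "ff x (Suc l) = ff x l * (x - of_nat l)"
  by (simp add: ff_def)

lemma ff_0 [simp]: "ff x 0 = 1"
  by (simp add: ff_def)

lemma stirling2_ff: "(\<Sum>l\<le>k. of_nat (Stirling k l) * ff x l) = x ^ k"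
proof (induction k)
  case 0 then show ?case by simp
next
  case (Suc k)
  have B: "(\<Sum>l\<le>k. of_nat (Suc l) * of_nat (Stirling k (Suc l)) * ff x (Suc l))
         = (\<Sum>l\<le>k. of_nat l * of_nat (Stirling k l) * ff x l)"
  proof -
    have "(\<Sum>l\<le>Suc k. of_nat l * of_nat (Stirling k l) * ff x l)
        = (\<Sum>l\<le>k. of_nat (Suc l) * of_nat (Stirling k (Suc l)) * ff x (Suc l))"
      by (subst sum.atMost_Suc_shift) simp
    moreover have "(\<Sum>l\<le>Suc k. of_nat l * of_nat (Stirling k l) * ff x l)
        = (\<Sum>l\<le>k. of_nat l * of_nat (Stirling k l) * ff x l)"
      by simp
    ultimately show ?thesis by simp
  qed
  have "(\<Sum>l\<le>Suc k. of_nat (Stirling (Suc k) l) * ff x l)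
      = (\<Sum>l\<le>k. of_nat (Stirling (Suc k) (Suc l)) * ff x (Suc l))"
    by (subst sum.atMost_Suc_shift) simp
  also have "\<dots> = (\<Sum>l\<le>k. of_nat (Suc l) * of_nat (Stirling k (Suc l)) * ff x (Suc l))
                 + (\<Sum>l\<le>k. of_nat (Stirling k l) * ff x (Suc l))"
    by (simp add: sum.distrib algebra_simps)
  also have "\<dots> = (\<Sum>l\<le>k. of_nat (Stirling k l) * (of_nat l * ff x l + ff x (Suc l)))"
    unfolding B by (simp add: sum.distrib algebra_simps)
  also have "\<dots> = (\<Sum>l\<le>k. of_nat (Stirling k l) * ff x l * x)"
    by (intro sum.cong refl) (simp add: ff_Suc algebra_simps)
  also have "\<dots> = x ^ Suc k"
    using Suc by (simp add: sum_distrib_right[symmetric])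
  finally show ?case .
qed

lemma ff_nat_ge: "l \<le> N \<Longrightarrow> ff (of_nat N) l * fact (N - l) = fact N"
proof (induction l)
  case 0 then show ?case by simp
next
  case (Suc l)
  have "fact (N - l) = of_nat (N - l) * (fact (N - Suc l) :: complex)"
    using Suc.prems by (metis Suc_diff_le diff_Suc_Suc diff_zero fact_Suc le_SucE Suc_le_lessD of_nat_fact Suc_diff_Suc)
  then have "ff (of_nat N) (Suc l) * fact (N - Suc l) = ff (of_nat N) l * fact (N - l)"
    using Suc.prems by (simp add: ff_Suc of_nat_diff)
  then show ?case using Suc by simp
qed

lemma ff_nat_gt: "N < l \<Longrightarrow> ff (of_nat N) l = 0"
  unfolding ff_def by (rule prod_zero) auto

lemma Ysum_ff:
  assumes V: "vpoch r f m \<noteq> 0"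
  shows "(\<Sum>l<(\<Sum>i<r. m i). Y r l \<beta> f m * ff x l) = poly (Wpoly r \<beta> f m) x"
proof -
  define M where "M = (\<Sum>i<r. m i)"
  define d where "d k = delta r \<beta> f m k" for k
  have Yl: "Y r l \<beta> f m = (\<Sum>k<M. d k * of_nat (Stirling k l))" for l
  proof -
    have "Y r l \<beta> f m = (\<Sum>k\<in>{l..<M}. d k * of_nat (Stirling k l))"
      unfolding Y_def M_def d_def ..
    also have "\<dots> = (\<Sum>k<M. d k * of_nat (Stirling k l))"
      by (rule sum.mono_neutral_left) auto
    finally show ?thesis .
  qed
  have "(\<Sum>l<M. Y r l \<beta> f m * ff x l) = (\<Sum>l<M. \<Sum>k<M. d k * (of_nat (Stirling k l) * ff x l))"
    unfolding Yl sum_distrib_right by (simp add: mult.assoc)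
  also have "\<dots> = (\<Sum>k<M. d k * (\<Sum>l<M. of_nat (Stirling k l) * ff x l))"
    by (subst sum.swap) (simp add: sum_distrib_left)
  also have "\<dots> = (\<Sum>k<M. d k * x ^ k)"
  proof (intro sum.cong refl)
    fix k assume "k \<in> {..<M}"
    then have "(\<Sum>l<M. of_nat (Stirling k l) * ff x l) = (\<Sum>l\<le>k. of_nat (Stirling k l) * ff x l)"
      by (intro sum.mono_neutral_right) auto
    then show "d k * (\<Sum>l<M. of_nat (Stirling k l) * ff x l) = d k * x ^ k"
      by (simp add: stirling2_ff)
  qed
  also have "\<dots> = poly (Wpoly r \<beta> f m) x"
    unfolding d_def delta_def
    by (rule poly_as_sum_lt[symmetric]) (use Wpoly_facts(2)[OF V] M_def in auto)
  finally show ?thesis unfolding M_def .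
qed

lemma g_shift:
  "pochhammer a (n + l) / fact (n + l) * ff (of_nat (n + l)) l
     = pochhammer a l * (pochhammer (a + of_nat l) n / fact n)"
proof -
  have "ff (of_nat (n + l)) l * fact n = fact (n + l)"
    using ff_nat_ge[of l "n + l"] by simp
  then have "ff (of_nat (n + l)) l = fact (n + l) / fact n"
    by (simp add: field_simps)
  then show ?thesis
    by (simp add: pochhammer_product' add.commute[of n l])
qed


lemma decomp_beta:
  assumes V: "vpoch r f m \<noteq> 0" and nz: "pochhammer (\<beta>+1) n \<noteq> 0"
  shows "vpoch r (\<lambda>i. f i + of_nat n) m / vpoch r f m * (pochhammer \<beta> n / pochhammer (\<beta>+1) n)
       = poly (Wpoly r \<beta> f m) (of_nat n) + vpoch r (\<lambda>i. f i - \<beta>) m / vpoch r f m * (pochhammer \<beta> n / pochhammer (\<beta>+1) n)"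
proof (cases "\<beta> + of_nat n = 0")
  case False
  define P where "P = vpoch r (\<lambda>i. f i + of_nat n) m"
  define c where "c = vpoch r (\<lambda>i. f i - \<beta>) m"
  define V where "V = vpoch r f m"
  have e: "(\<beta> + of_nat n) * pochhammer \<beta> n = \<beta> * pochhammer (\<beta>+1) n"
    using pochhammer_rec'[of \<beta> n] pochhammer_rec[of \<beta> n] by (simp add: add.commute)
  have ratio: "pochhammer \<beta> n / pochhammer (\<beta>+1) n = \<beta> / (\<beta> + of_nat n)"
    using e nz False by (simp add: field_simps)
  have h: "(of_nat n + \<beta>) * poly (Wpoly r \<beta> f m) (of_nat n) = \<beta> * (P - c) / V"
    using Wpoly_facts(1)[OF V, of "of_nat n" \<beta>] unfolding P_def c_def V_def by simp
  have nz': "of_nat n + \<beta> \<noteq> 0" using False by (simp add: add.commute)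
  have W: "poly (Wpoly r \<beta> f m) (of_nat n) = \<beta> * (P - c) / V / (\<beta> + of_nat n)"
    unfolding add.commute[of \<beta>] by (metis h nz' nonzero_mult_div_cancel_left)
  have V0: "V \<noteq> 0" using assms V_def by simp
  have aux: "\<And>d V P c::complex. d \<noteq> 0 \<Longrightarrow> V \<noteq> 0 \<Longrightarrow> P/V*(\<beta>/d) = \<beta>*(P-c)/V/d + c/V*(\<beta>/d)"
    by (simp add: field_simps)
  show ?thesis
    unfolding ratio W[unfolded P_def c_def V_def]
    by (rule aux[OF False V0[unfolded V_def]])
next
  case True
  have "n = 0"
  proof (rule ccontr)
    assume "n \<noteq> 0"
    then obtain k where k: "n = Suc k" by (cases n) auto
    have "\<beta> + 1 = - of_nat k" using True k by (simp add: eq_neg_iff_add_eq_0 algebra_simps)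
    then have "pochhammer (\<beta>+1) n = 0" using k by (auto simp: pochhammer_eq_0_iff)
    then show False using nz by simp
  qed
  with True have "\<beta> = 0" by simp
  then show ?thesis using \<open>n = 0\<close> V by (simp add: Wpoly_def)
qed

lemma ratio_split:
  fixes b :: complex
  assumes q: "pochhammer (b+1) n \<noteq> 0" and s: "pochhammer (b+2) n \<noteq> 0"
  shows "pochhammer b n / pochhammer (b+2) n
       = (b+1) * (pochhammer b n / pochhammer (b+1) n) - b * (pochhammer (b+1) n / pochhammer (b+2) n)"
proof -
  define p where "p = pochhammer b n"
  define Q where "Q = pochhammer (b+1) n"
  define S where "S = pochhammer (b+2) n"
  have e1: "(b+1) * S = (b + 1 + of_nat n) * Q"
    using pochhammer_rec'[of "b+1" n] pochhammer_rec[of "b+1" n] unfolding S_def Q_def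
    by (simp add: add.assoc one_add_one)
  have e2: "b * Q = (b + of_nat n) * p"
    using pochhammer_rec'[of b n] pochhammer_rec[of b n] unfolding p_def Q_def by simp
  have Q0: "Q \<noteq> 0" and S0: "S \<noteq> 0" using q s Q_def S_def by auto
  have a1: "(b+1) * (p / Q) = p * (b + 1 + of_nat n) / S"
  proof -
    have "(b+1)*(p/Q) = ((b+1)*S)*p/(Q*S)" using Q0 S0 by (simp add: field_simps)
    also have "\<dots> = ((b + 1 + of_nat n)*Q)*p/(Q*S)" by (simp only: e1)
    also have "\<dots> = p * (b + 1 + of_nat n) / S" using Q0 S0 by (simp add: field_simps)
    finally show ?thesis .
  qed
  have a2: "b * (Q / S) = p * (b + of_nat n) / S"
  proof -
    have "b * (Q / S) = (b * Q) / S" by simp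
    also have "\<dots> = p * (b + of_nat n) / S" unfolding e2 by (simp add: mult.commute)
    finally show ?thesis .
  qed
  show ?thesis
    unfolding p_def[symmetric] Q_def[symmetric] S_def[symmetric] a1 a2
    using S0 by (simp add: field_simps)
qed


lemma vpoch_shift:
  "vpoch r (\<lambda>i. g i + 1) m * (\<Prod>i<r. g i) = vpoch r g m * (\<Prod>i<r. g i + of_nat (m i))"
proof -
  have "\<And>i. pochhammer (g i + 1) (m i) * g i = pochhammer (g i) (m i) * (g i + of_nat (m i))"
    using pochhammer_rec pochhammer_rec' by (metis add.commute mult.commute)
  then show ?thesis unfolding vpoch_def prod.distrib[symmetric] by simp
qed

lemma Bn_0: "Bn 0 = 1"
  by (rule fps_ext) (auto simp: pochhammer_0_left)

lemma Hc_algebra: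
  fixes A B b e lam P1 P0 :: complex
  assumes rel: "A * P0 = B * P1"
    and e0: "e \<noteq> 0" and X1: "(b+1) * P1 - b * P0 \<noteq> 0" and X2: "e * P1 - b * P0 \<noteq> 0"
    and lam: "lam = e * ((b+1) * P1 - b * P0) / (e * P1 - b * P0)"
  shows "((b+1) * A - b * B) / lam = A - b * B / e"
proof -
  have lam0: "lam \<noteq> 0" using lam e0 X1 X2 by simp
  have "((b+1) * A - b * B) * (e * P1 - b * P0) = ((b+1) * P1 - b * P0) * (e * A - b * B)
        + b * (e - b - 1) * (A * P0 - B * P1)"
    by (simp add: algebra_simps)
  then have "((b+1) * A - b * B) * (e * P1 - b * P0) = ((b+1) * P1 - b * P0) * (e * A - b * B)"
    using rel by simp
  then have id: "((b+1) * A - b * B) * (e * P1 - b * P0) = ((b+1) * P1 - b * P0) * (e * A - b * B)" .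
  have "((b+1) * A - b * B) / lam = ((b+1) * A - b * B) * (e * P1 - b * P0) / (e * ((b+1) * P1 - b * P0))"
    unfolding lam by simp
  also have "\<dots> = ((b+1) * P1 - b * P0) * (e * A - b * B) / (e * ((b+1) * P1 - b * P0))"
    unfolding id ..
  also have "\<dots> = (e * A - b * B) / e" using X1 by simp
  also have "\<dots> = A - b * B / e" using e0 by (simp add: field_simps)
  finally show ?thesis .
qed

lemma main_fps_generic:
  fixes r :: nat and m :: "nat \<Rightarrow> nat" and f :: "nat \<Rightarrow> complex" and a b :: complex
  defines "V \<equiv> vpoch r f m"
  defines "A \<equiv> vpoch r (\<lambda>i. f i - b) m / V"
  defines "B \<equiv> vpoch r (\<lambda>i. f i - b - 1) m / V"
  defines "P1 \<equiv> (\<Prod>i<r. f i - b - 1 + of_nat (m i))"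
  defines "P0 \<equiv> (\<Prod>i<r. f i - b - 1)"
  defines "lam \<equiv> (b - a + 1) * ((b + 1) * P1 - b * P0) / ((b - a + 1) * P1 - b * P0)"
  defines "Fser \<equiv> Abs_fps (\<lambda>n. pochhammer a n / fact n * (pochhammer b n / pochhammer (b+2) n)
                                 * (vpoch r (\<lambda>i. f i + of_nat n) m / V))"
  defines "Qser \<equiv> Abs_fps (\<lambda>n. pochhammer a n / fact n * ((b+1) * poly (Wpoly r b f m) (of_nat n)
                                 - b * poly (Wpoly r (b+1) f m) (of_nat n)))"
  defines "Hc \<equiv> Abs_fps (\<lambda>n. ((b+1) * A - b * B) * (pochhammer (b+1-a) n / pochhammer (b+2) n * (1 + of_nat n / lam)))"
  assumes V0: "V \<noteq> 0" and b1: "b \<noteq> -1" and b2: "\<And>n. b + 2 \<noteq> - of_nat n"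
    and h2: "(b+1) * P1 \<noteq> b * P0" and h3: "(b-a+1) * P1 \<noteq> b * P0" and lam0: "lam \<noteq> 0"
  shows "Fser = Qser + Bn (a - 1) * Hc"
proof -
  have hb: "b + 1 \<noteq> - of_nat n" for n
  proof (cases n)
    case 0 then show ?thesis using b1 by (auto simp: eq_neg_iff_add_eq_0)
  next
    case (Suc k)
    show ?thesis
    proof
      assume "b + 1 = - of_nat n"
      then have "b + 2 = - of_nat k" using Suc by (simp add: algebra_simps eq_neg_iff_add_eq_0)
      then show False using b2 by blast
    qed
  qed
  have b11: "b + 1 + 1 = b + 2" by simp
  have hb1: "b + 1 + 1 \<noteq> - of_nat n" for n unfolding b11 by (rule b2)
  have q: "pochhammer (b+1) n \<noteq> 0" for n using poch_nz hb by blast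
  have s: "pochhammer (b+2) n \<noteq> 0" for n using poch_nz b2 by blast
  have fb1: "(\<lambda>i. f i - (b + 1)) = (\<lambda>i. f i - b - 1)" by (simp add: algebra_simps)
  have step1: "Fser = Qser + fps_const ((b+1) * A) * Tser a b - fps_const (b * B) * Tser a (b+1)"
  proof (rule fps_ext)
    fix n
    define pa where "pa = pochhammer a n / fact n"
    define P where "P = vpoch r (\<lambda>i. f i + of_nat n) m"
    define r1 where "r1 = pochhammer b n / pochhammer (b+1) n"
    define r2 where "r2 = pochhammer (b+1) n / pochhammer (b+2) n"
    define W0 where "W0 = poly (Wpoly r b f m) (of_nat n)"
    define W1 where "W1 = poly (Wpoly r (b+1) f m) (of_nat n)"
    have d1: "P / V * r1 = W0 + A * r1"
      using decomp_beta[OF V0[unfolded V_def] q[of n]]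
      unfolding P_def r1_def W0_def A_def V_def by simp
    have d2: "P / V * r2 = W1 + B * r2"
      using decomp_beta[OF V0[unfolded V_def], of "b+1" n] hb1 poch_nz
      unfolding P_def r2_def W1_def B_def V_def b11 fb1 by blast
    have rs: "pochhammer b n / pochhammer (b+2) n = (b+1) * r1 - b * r2"
      unfolding r1_def r2_def by (rule ratio_split[OF q s])
    have ring1: "\<And>pa x y u :: complex. pa * ((b+1) * x - b * y) * u = pa * ((b+1) * (u * x) - b * (u * y))"
      by (simp add: algebra_simps)
    have ring2: "\<And>pa W0 W1 r1 r2 :: complex. pa * ((b+1) * (W0 + A * r1) - b * (W1 + B * r2))
        = pa * ((b+1) * W0 - b * W1) + (b+1) * A * (pa * r1) - b * B * (pa * r2)"
      by (simp add: algebra_simps)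
    have "Fser $ n = pa * ((b+1) * r1 - b * r2) * (P / V)"
      unfolding Fser_def pa_def P_def fps_nth_Abs_fps rs ..
    also have "\<dots> = pa * ((b+1) * (P / V * r1) - b * (P / V * r2))"
      by (rule ring1)
    also have "\<dots> = pa * ((b+1) * W0 - b * W1) + (b+1) * A * (pa * r1) - b * B * (pa * r2)"
      unfolding d1 d2 by (rule ring2)
    also have "\<dots> = (Qser + fps_const ((b+1) * A) * Tser a b - fps_const (b * B) * Tser a (b+1)) $ n"
      unfolding Qser_def pa_def W0_def W1_def r1_def r2_def by (simp add: b11)
    finally show "Fser $ n = (Qser + fps_const ((b+1) * A) * Tser a b - fps_const (b * B) * Tser a (b+1)) $ n" .
  qed
  have E1: "Tser a b = Bn (a - 1) * User a b" using Euler_T hb by blast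
  have E2: "Tser a (b+1) = Bn (a - 1) * User a (b+1)" using Euler_T hb1 by blast
  define e where "e = b + 1 - a"
  have e0: "e \<noteq> 0"
  proof
    assume "e = 0"
    then have "b - a + 1 = 0" unfolding e_def by (simp add: algebra_simps)
    then have "lam = 0" unfolding lam_def by simp
    then show False using lam0 by simp
  qed
  have rel: "A * P0 = B * P1"
  proof -
    have "vpoch r (\<lambda>i. f i - b - 1 + 1) m * P0 = vpoch r (\<lambda>i. f i - b - 1) m * P1"
      unfolding P0_def P1_def by (rule vpoch_shift)
    then have "vpoch r (\<lambda>i. f i - b) m * P0 = vpoch r (\<lambda>i. f i - b - 1) m * P1" by simp
    then show ?thesis unfolding A_def B_def by (simp add: field_simps)
  qed
  have Cl: "((b+1) * A - b * B) / lam = A - b * B / e"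
    by (rule Hc_algebra[OF rel e0]) (use h2 h3 in \<open>auto simp: lam_def e_def algebra_simps\<close>)
  have step3: "fps_const ((b+1) * A) * User a b - fps_const (b * B) * User a (b+1) = Hc"
  proof (rule fps_ext)
    fix n
    define pe where "pe = pochhammer e n"
    define Q where "Q = pochhammer (b+1) n"
    define S where "S = pochhammer (b+2) n"
    have S0: "S \<noteq> 0" using s S_def by simp
    have Q0: "Q \<noteq> 0" using q Q_def by simp
    have e1: "(b+1) * S = (b + 1 + of_nat n) * Q"
      using pochhammer_rec'[of "b+1" n] pochhammer_rec[of "b+1" n] unfolding S_def Q_def
      by (simp add: add.assoc one_add_one)
    have pe1: "pochhammer (b + 1 + 1 - a) n = pe * (e + of_nat n) / e"
    proof -
      have "pochhammer (e + 1) n * e = pe * (e + of_nat n)"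
        using pochhammer_rec'[of e n] pochhammer_rec[of e n] unfolding pe_def by (simp add: mult.commute)
      moreover have "b + 1 + 1 - a = e + 1" unfolding e_def by simp
      ultimately show ?thesis using e0 by (simp add: field_simps)
    qed
    have t1: "(b+1) * A * (pe / Q) = A * pe * (b + 1 + of_nat n) / S"
    proof -
      have "(b+1) * A * (pe / Q) = ((b+1) * S) * A * pe / (Q * S)" using Q0 S0 by (simp add: field_simps)
      also have "\<dots> = ((b + 1 + of_nat n) * Q) * A * pe / (Q * S)" by (simp only: e1)
      also have "\<dots> = A * pe * (b + 1 + of_nat n) / S" using Q0 S0 by (simp add: field_simps)
      finally show ?thesis .
    qed
    have aux: "\<And>A B pe S e n b C l. S \<noteq> 0 \<Longrightarrow> e \<noteq> 0 \<Longrightarrow> C = (b+1) * A - b * B \<Longrightarrow> C / l = A - b * B / e \<Longrightarrow>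
        A * pe * (b + 1 + n) / S - b * B * (pe * (e + n) / e / S) = C * (pe / S * (1 + n / (l::complex)))"
    proof -
      fix A B pe S e n b C l :: complex
      assume S0: "S \<noteq> 0" and e0: "e \<noteq> 0" and C: "C = (b+1) * A - b * B" and Cl: "C / l = A - b * B / e"
      have "C * (pe / S * (1 + n / l)) = pe / S * (C + n * (C / l))" by (simp add: algebra_simps)
      also have "\<dots> = pe / S * ((b+1) * A - b * B + n * (A - b * B / e))" unfolding Cl by (simp only: C)
      also have "\<dots> = A * pe * (b + 1 + n) / S - b * B * (pe * (e + n) / e / S)"
        using S0 e0 by (simp add: field_simps)
      finally show "A * pe * (b + 1 + n) / S - b * B * (pe * (e + n) / e / S) = C * (pe / S * (1 + n / l))" ..
    qed
    have "(fps_const ((b+1) * A) * User a b - fps_const (b * B) * User a (b+1)) $ n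
        = (b+1) * A * (pe / Q) - b * B * (pochhammer (b + 1 + 1 - a) n / S)"
      unfolding pe_def Q_def S_def e_def b11 by (simp add: add_ac)
    also have "\<dots> = A * pe * (b + 1 + of_nat n) / S - b * B * (pe * (e + of_nat n) / e / S)"
      unfolding t1 pe1 ..
    also have "\<dots> = ((b+1) * A - b * B) * (pe / S * (1 + of_nat n / lam))"
      by (rule aux[OF S0 e0 refl Cl])
    also have "\<dots> = Hc $ n" unfolding Hc_def pe_def S_def e_def by simp
    finally show "(fps_const ((b+1) * A) * User a b - fps_const (b * B) * User a (b+1)) $ n = Hc $ n" .
  qed
  show ?thesis
    unfolding step1 E1 E2 step3[symmetric] by (simp add: algebra_simps)
qed

lemma main_fps_m1:
  fixes r :: nat and m :: "nat \<Rightarrow> nat" and f :: "nat \<Rightarrow> complex" and a b :: complex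
  defines "V \<equiv> vpoch r f m"
  defines "A \<equiv> vpoch r (\<lambda>i. f i - b) m / V"
  defines "B \<equiv> vpoch r (\<lambda>i. f i - b - 1) m / V"
  defines "P1 \<equiv> (\<Prod>i<r. f i - b - 1 + of_nat (m i))"
  defines "P0 \<equiv> (\<Prod>i<r. f i - b - 1)"
  defines "lam \<equiv> (b - a + 1) * ((b + 1) * P1 - b * P0) / ((b - a + 1) * P1 - b * P0)"
  defines "Fser \<equiv> Abs_fps (\<lambda>n. pochhammer a n / fact n * (pochhammer b n / pochhammer (b+2) n)
                                 * (vpoch r (\<lambda>i. f i + of_nat n) m / V))"
  defines "Qser \<equiv> Abs_fps (\<lambda>n. pochhammer a n / fact n * ((b+1) * poly (Wpoly r b f m) (of_nat n)
                                 - b * poly (Wpoly r (b+1) f m) (of_nat n)))"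
  defines "Hc \<equiv> Abs_fps (\<lambda>n. ((b+1) * A - b * B) * (pochhammer (b+1-a) n / pochhammer (b+2) n * (1 + of_nat n / lam)))"
  assumes V0: "V \<noteq> 0" and b1: "b = -1"
    and h2: "(b+1) * P1 \<noteq> b * P0" and h3: "(b-a+1) * P1 \<noteq> b * P0" and lam0: "lam \<noteq> 0"
  shows "Fser = Qser + Bn (a - 1) * Hc"
proof -
  have Q0: "Qser = 0"
    by (rule fps_ext) (simp add: Qser_def b1 Wpoly_def)
  have P1e: "P1 = (\<Prod>i<r. f i + of_nat (m i))" unfolding P1_def b1 by simp
  have P0e: "P0 = (\<Prod>i<r. f i)" unfolding P0_def b1 by simp
  have lamE: "lam = (- a) * P0 / (P0 - a * P1)" unfolding lam_def b1 by simp
  have P00: "P0 \<noteq> 0" using h2 b1 by simp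
  have D0: "P0 - a * P1 \<noteq> 0" using h3 b1 by simp
  have a0: "a \<noteq> 0" using lam0 lamE by auto
  have C1: "(b+1) * A - b * B = 1" unfolding A_def B_def b1 using V0 by (simp add: V_def)
  define P1r where "P1r = vpoch r (\<lambda>i. f i + 1) m / V"
  have P1r: "P1r = P1 / P0"
  proof -
    have "vpoch r (\<lambda>i. f i + 1) m * P0 = V * P1"
      unfolding P0e P1e V_def by (rule vpoch_shift)
    then show ?thesis unfolding P1r_def using V0 P00 by (simp add: field_simps)
  qed
  have key: "a * P1r = 1 + a / lam"
    unfolding P1r lamE using P00 D0 a0 by (simp add: field_simps)
  have F: "Fser = 1 - fps_const (a * P1r) * fps_X"
  proof (rule fps_ext)
    fix n
    show "Fser $ n = (1 - fps_const (a * P1r) * fps_X) $ n"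
    proof (cases "n \<le> 1")
      case True
      then consider "n = 0" | "n = 1" by linarith
      then show ?thesis
        by cases (use V0 in \<open>simp_all add: Fser_def P1r_def b1 V_def\<close>)
    next
      case False
      then have "pochhammer b n = 0" unfolding b1 by (auto simp: pochhammer_eq_0_iff intro!: exI[of _ 1])
      then show ?thesis using False by (simp add: Fser_def)
    qed
  qed
  have H: "Hc = Bn (- a) + fps_const (1 / lam) * (fps_X * fps_deriv (Bn (- a)))"
  proof (rule fps_ext)
    fix n
    have "Hc $ n = pochhammer (- a) n / fact n * (1 + of_nat n / lam)"
      unfolding Hc_def fps_nth_Abs_fps unfolding C1 unfolding b1 by (simp add: pochhammer_fact)
    also have "\<dots> = (Bn (- a) + fps_const (1 / lam) * (fps_X * fps_deriv (Bn (- a)))) $ n"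
    proof -
      have aux: "\<And>x::complex. x * (1 + of_nat n / lam) = x + 1 / lam * (of_nat n * x)"
        by (simp add: algebra_simps)
      show ?thesis by (simp only: fps_add_nth theta_nth fps_mult_left_const_nth Bn_nth aux)
    qed
    finally show "Hc $ n = (Bn (- a) + fps_const (1 / lam) * (fps_X * fps_deriv (Bn (- a)))) $ n" .
  qed
  have d: "fps_deriv (Bn (- a)) = fps_const (- a) * Bn (1 - a)"
    using Bn_deriv[of "- a"] by simp
  have sh: "Bn (- a) = (1 - fps_X) * Bn (1 - a)"
    using Bn_shift[of "1 - a"] by simp
  have m1: "Bn (a - 1) * Bn (1 - a) = 1"
    using Bn_mult[of "a - 1" "1 - a"] by (simp add: Bn_0)
  have c0: "fps_const (1/lam) * fps_const (-a) = - fps_const (a/lam)"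
    by (simp only: fps_const_mult fps_const_neg[symmetric]) simp
  have cc: "fps_const (1/lam) * (fps_X * (fps_const (-a) * G)) = - (fps_const (a/lam) * fps_X * G)" for G
  proof -
    have "fps_const (1/lam) * (fps_X * (fps_const (-a) * G)) = (fps_const (1/lam) * fps_const (-a)) * fps_X * G"
      by (simp only: mult_ac)
    also have "\<dots> = (- fps_const (a/lam)) * fps_X * G" unfolding c0 ..
    finally show ?thesis by (simp only: minus_mult_left)
  qed
  have "Bn (a - 1) * Hc = (Bn (a - 1) * Bn (1 - a)) * (1 - fps_X - fps_const (a / lam) * fps_X)"
    unfolding H unfolding d unfolding cc unfolding sh by (simp add: algebra_simps)
  also have "\<dots> = 1 - fps_const (1 + a / lam) * fps_X"
    unfolding m1 by (simp add: algebra_simps)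
  finally show ?thesis unfolding F Q0 key by simp
qed


lemma eventually_nz: "eventually (\<lambda>n. (\<beta>::complex) + of_nat n \<noteq> 0) sequentially"
proof -
  have "eventually (\<lambda>n. norm \<beta> < real n) sequentially"
    using eventually_gt_at_top[of "nat (ceiling (norm \<beta>))"]
    by eventually_elim linarith
  then show ?thesis
  proof eventually_elim
    case (elim n)
    show ?case
    proof
      assume "\<beta> + of_nat n = 0"
      then have "\<beta> = - of_nat n" by (simp add: eq_neg_iff_add_eq_0)
      then have "norm \<beta> = real n" by simp
      then show False using elim by simp
    qed
  qed
qed

lemma lim_ratio: "((\<lambda>n. ((\<alpha>::complex) + of_nat n) / (\<beta> + of_nat n)) \<longlongrightarrow> 1) sequentially"
proof -
  have inf: "filterlim (\<lambda>n. \<beta> + of_nat n :: complex) at_infinity sequentially"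
    by (rule tendsto_add_filterlim_at_infinity[OF tendsto_const tendsto_of_nat])
  have "((\<lambda>n. 1 + (\<alpha> - \<beta>) / (\<beta> + of_nat n)) \<longlongrightarrow> 1 + 0) sequentially"
    by (intro tendsto_add tendsto_const tendsto_divide_0[OF tendsto_const inf])
  then have lim: "((\<lambda>n. 1 + (\<alpha> - \<beta>) / (\<beta> + of_nat n)) \<longlongrightarrow> 1) sequentially" by simp
  show ?thesis
  proof (rule Lim_transform_eventually[OF lim])
    show "\<forall>\<^sub>F n in sequentially. 1 + (\<alpha> - \<beta>) / (\<beta> + of_nat n) = (\<alpha> + of_nat n) / (\<beta> + of_nat n)"
      using eventually_nz[of \<beta>] by eventually_elim (simp add: field_simps)
  qed
qed

lemma ratio_abs_summable:
  fixes c \<rho> :: "nat \<Rightarrow> complex" and x :: complex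
  assumes rec: "\<And>n. c (Suc n) = \<rho> n * c n" and lim: "(\<rho> \<longlongrightarrow> 1) sequentially"
    and x: "norm x < 1"
  shows "summable (\<lambda>n. norm (c n * x ^ n))"
proof (cases "x = 0")
  case True
  have "summable (\<lambda>n. if n = 0 then norm (c 0) else 0)" by simp
  moreover have "(\<lambda>n. norm (c n * x ^ n)) = (\<lambda>n. if n = 0 then norm (c 0) else 0)"
    using True by (auto simp: fun_eq_iff)
  ultimately show ?thesis by simp
next
  case False
  define q where "q = (1 + norm x) / 2"
  have q1: "q < 1" using x q_def by simp
  have xq: "norm x < q" using x q_def by simp
  have nx: "norm x > 0" using False by simp
  have "((\<lambda>n. norm (\<rho> n)) \<longlongrightarrow> norm (1::complex)) sequentially"
    by (rule tendsto_norm[OF lim])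
  then have "eventually (\<lambda>n. norm (\<rho> n) < q / norm x) sequentially"
    using xq nx by (intro order_tendstoD(2)) (auto simp: field_simps)
  then obtain N where N: "\<And>n. n \<ge> N \<Longrightarrow> norm (\<rho> n) < q / norm x"
    unfolding eventually_sequentially by blast
  show ?thesis
  proof (rule summable_ratio_test[OF q1])
    fix n assume "n \<ge> N"
    then have h: "norm (\<rho> n) * norm x \<le> q" using N[of n] nx by (simp add: field_simps)
    have "norm (norm (c (Suc n) * x ^ Suc n)) = (norm (\<rho> n) * norm x) * norm (c n * x ^ n)"
      by (simp add: rec norm_mult norm_power mult_ac)
    also have "\<dots> \<le> q * norm (c n * x ^ n)"
      by (rule mult_right_mono[OF h]) simp
    also have "\<dots> = q * norm (norm (c n * x ^ n))" by simp
    finally show "norm (norm (c (Suc n) * x ^ Suc n)) \<le> q * norm (norm (c n * x ^ n))" .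
  qed
qed

lemma Bn_sums:
  assumes "norm x < 1"
  shows "(\<lambda>n. Bn s $ n * x ^ n) sums ((1 - x) powr (- s))"
proof -
  have "norm (-x) < 1" using assms by simp
  from gen_binomial_complex[OF this, of "-s"]
  have "(\<lambda>n. ((-s) gchoose n) * (-x) ^ n) sums ((1 + - x) powr (- s))" .
  moreover have "((-s) gchoose n) * (-x) ^ n = Bn s $ n * x ^ n" for n
  proof -
    have "((-s) gchoose n) * (-x) ^ n = ((-1) ^ n * (-1) ^ n) * (pochhammer s n / fact n * x ^ n)"
      by (simp add: gbinomial_pochhammer power_minus[of x] mult_ac)
    also have "(-1::complex) ^ n * (-1) ^ n = 1" by (simp add: power_mult_distrib[symmetric])
    finally show ?thesis by simp
  qed
  ultimately show ?thesis by simp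
qed

lemma Bn_abs_summable:
  assumes "norm x < 1"
  shows "summable (\<lambda>n. norm (Bn s $ n * x ^ n))"
proof (rule ratio_abs_summable[OF _ _ assms])
  show "Bn s $ Suc n = (s + of_nat n) / (1 + of_nat n) * Bn s $ n" for n
  proof -
    have "Bn s $ Suc n = ((s + of_nat n) * pochhammer s n) / ((1 + of_nat n) * fact n)"
      unfolding Bn_nth pochhammer_rec' fact_Suc of_nat_mult of_nat_Suc by simp
    also have "\<dots> = (s + of_nat n) / (1 + of_nat n) * Bn s $ n"
      by (simp only: Bn_nth times_divide_times_eq)
    finally show ?thesis .
  qed
  show "((\<lambda>n. (s + of_nat n) / (1 + of_nat n)) \<longlongrightarrow> 1) sequentially" by (rule lim_ratio)
qed

lemma prod_list_upt: "prod_list (map g [0..<r]) = (\<Prod>i<r. g i)"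
  by (induction r) (simp_all add: prod.lessThan_Suc)


theorem corollary3:
  fixes r :: nat and m :: "nat \<Rightarrow> nat" and f :: "nat \<Rightarrow> complex"
    and a b x :: complex
  defines "M \<equiv> (\<Sum>i<r. m i)"
  defines "\<Pi>1 \<equiv> (\<Prod>i<r. f i - b - 1 + of_nat (m i))"
  defines "\<Pi>0 \<equiv> (\<Prod>i<r. f i - b - 1)"
  defines "lam \<equiv> (b - a + 1) * ((b + 1) * \<Pi>1 - b * \<Pi>0) / ((b - a + 1) * \<Pi>1 - b * \<Pi>0)"
  assumes "r \<ge> 1"
    and "(b + 1) * \<Pi>1 \<noteq> b * \<Pi>0"
    and "(b - a + 1) * \<Pi>1 \<noteq> b * \<Pi>0"
    and "\<And>n::nat. b + 2 \<noteq> - of_nat n"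
    and "\<And>i n::nat. i < r \<Longrightarrow> f i \<noteq> - of_nat n"
    and "\<And>n::nat. lam \<noteq> - of_nat n"
    and "norm x < 1"
  shows "(1 - x) powr (a - 1) *
           hyperF ([a, b] @ map (\<lambda>i. f i + of_nat (m i)) [0..<r]) ([b + 2] @ map f [0..<r]) x
         = ((b + 1) * vpoch r (\<lambda>i. f i - b) m - b * vpoch r (\<lambda>i. f i - b - 1) m) / vpoch r f m
             * hyperF [1, b + 1 - a, lam + 1] [b + 2, lam] x
           + (\<Sum>l<M. ((b + 1) * Y r l b f m - b * Y r l (b + 1) f m)
                       * pochhammer a l * x ^ l / (1 - x) ^ (l + 1))"
proof -
  note h2 = assms(6) and h3 = assms(7) and b2 = assms(8) and hf = assms(9)
    and hlam = assms(10) and xlt = assms(11)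
  define V where "V = vpoch r f m"
  define A where "A = vpoch r (\<lambda>i. f i - b) m / V"
  define B where "B = vpoch r (\<lambda>i. f i - b - 1) m / V"
  define C where "C = (b + 1) * A - b * B"
  define e where "e = b + 1 - a"
  define K where "K l = (b + 1) * Y r l b f m - b * Y r l (b + 1) f m" for l
  define Fser where "Fser = Abs_fps (\<lambda>n. pochhammer a n / fact n * (pochhammer b n / pochhammer (b+2) n)
                                 * (vpoch r (\<lambda>i. f i + of_nat n) m / V))"
  define Qser where "Qser = Abs_fps (\<lambda>n. pochhammer a n / fact n * ((b+1) * poly (Wpoly r b f m) (of_nat n)
                                 - b * poly (Wpoly r (b+1) f m) (of_nat n)))"
  define h where "h n = pochhammer e n / pochhammer (b+2) n * (1 + of_nat n / lam)" for n
  define Hc where "Hc = Abs_fps (\<lambda>n. C * h n)"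
  define HF2 where "HF2 = hyperF [1, b + 1 - a, lam + 1] [b + 2, lam] x"
  have V0: "V \<noteq> 0"
    unfolding V_def vpoch_def by (auto simp: prod_zero_iff pochhammer_eq_0_iff dest: hf)
  have lam0: "lam \<noteq> 0" using hlam[of 0] by simp
  have FPS: "Fser = Qser + Bn (a - 1) * Hc"
  proof (cases "b = -1")
    case True
    show ?thesis
      unfolding Fser_def Qser_def Hc_def h_def C_def A_def B_def V_def e_def lam_def \<Pi>1_def \<Pi>0_def
      by (rule main_fps_m1) (use True h2 h3 lam0 V0 in \<open>simp_all add: V_def lam_def \<Pi>1_def \<Pi>0_def\<close>)
  next
    case False
    show ?thesis
      unfolding Fser_def Qser_def Hc_def h_def C_def A_def B_def V_def e_def lam_def \<Pi>1_def \<Pi>0_def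
      by (rule main_fps_generic) (use False b2 h2 h3 lam0 V0 in \<open>simp_all add: V_def lam_def \<Pi>1_def \<Pi>0_def\<close>)
  qed
  have s: "pochhammer (b+2) n \<noteq> 0" for n using poch_nz b2 by blast
  have laml: "pochhammer lam n \<noteq> 0" for n using poch_nz hlam by blast
  have lamn: "lam + of_nat n \<noteq> 0" for n
  proof
    assume "lam + of_nat n = 0"
    then have "lam = - of_nat n" by (simp add: eq_neg_iff_add_eq_0)
    then show False using hlam by blast
  qed
  have b2n: "b + 2 + of_nat n \<noteq> 0" for n
  proof
    assume "b + 2 + of_nat n = 0"
    then have "b + 2 = - of_nat n" by (simp add: eq_neg_iff_add_eq_0)
    then show False using b2 by blast
  qed
  have hterm: "prod_list (map (\<lambda>a. pochhammer a n) [1, b + 1 - a, lam + 1])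
        / prod_list (map (\<lambda>c. pochhammer c n) [b + 2, lam]) * x ^ n / fact n = h n * x ^ n" for n
  proof -
    have L: "pochhammer (lam + 1) n * lam = pochhammer lam n * (lam + of_nat n)"
      using pochhammer_rec[of lam n] pochhammer_rec'[of lam n] by (simp add: mult.commute add.commute)
    have r1: "pochhammer (lam + 1) n / pochhammer lam n = 1 + of_nat n / lam"
      using L laml[of n] lam0 by (simp add: field_simps)
    have aux: "\<And>F p q u v X. F \<noteq> 0 \<Longrightarrow> q \<noteq> 0 \<Longrightarrow> v \<noteq> 0 \<Longrightarrow>
        F * (p * u) / (q * v) * X / F = p / q * (u / v) * (X::complex)"
      by (simp add: field_simps)
    have n1: "prod_list (map (\<lambda>a. pochhammer a n) [1, b + 1 - a, lam + 1])
        = fact n * (pochhammer e n * pochhammer (lam + 1) n)"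
      by (simp add: pochhammer_fact e_def)
    have d1: "prod_list (map (\<lambda>c. pochhammer c n) [b + 2, lam]) = pochhammer (b+2) n * pochhammer lam n"
      by simp
    show ?thesis
      unfolding n1 d1 aux[OF fact_nonzero s laml] r1 h_def ..
  qed
  have HF2: "HF2 = (\<Sum>n. h n * x ^ n)"
    unfolding HF2_def hyperF_def hterm ..
  have habs: "summable (\<lambda>n. norm (h n * x ^ n))"
  proof (rule ratio_abs_summable[OF _ _ xlt])
    show "h (Suc n) = ((e + of_nat n) / (b + 2 + of_nat n) * ((lam + 1 + of_nat n) / (lam + of_nat n))) * h n" for n
    proof -
      have aux: "\<And>P Q u v l w :: complex. Q \<noteq> 0 \<Longrightarrow> v \<noteq> 0 \<Longrightarrow> l \<noteq> 0 \<Longrightarrow> w \<noteq> 0 \<Longrightarrow>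
          u * P / (v * Q) * ((l + 1 + of_nat n) / l) = (u / v * ((l + 1 + of_nat n) / w)) * (P / Q * (w / l))"
        by (simp add: field_simps)
      have "h (Suc n) = (e + of_nat n) * pochhammer e n / ((b + 2 + of_nat n) * pochhammer (b+2) n) * ((lam + 1 + of_nat n) / lam)"
        unfolding h_def pochhammer_rec' using lam0 by (simp add: field_simps)
      also have "\<dots> = ((e + of_nat n) / (b + 2 + of_nat n) * ((lam + 1 + of_nat n) / (lam + of_nat n)))
                 * (pochhammer e n / pochhammer (b+2) n * ((lam + of_nat n) / lam))"
        by (rule aux[OF s b2n lam0 lamn])
      also have "(lam + of_nat n) / lam = 1 + of_nat n / lam" using lam0 by (simp add: field_simps)
      finally show ?thesis unfolding h_def by simp
    qed
    show "((\<lambda>n. (e + of_nat n) / (b + 2 + of_nat n) * ((lam + 1 + of_nat n) / (lam + of_nat n))) \<longlongrightarrow> 1) sequentially"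
      using tendsto_mult[OF lim_ratio lim_ratio] by simp
  qed
  have Hcabs: "summable (\<lambda>n. norm (Hc $ n * x ^ n))"
    unfolding Hc_def using summable_mult[OF habs, of "norm C"] by (simp add: norm_mult mult.assoc)
  have Hcsum: "(\<Sum>n. Hc $ n * x ^ n) = C * HF2"
    unfolding HF2 Hc_def using suminf_mult[OF summable_norm_cancel[OF habs], of C] by (simp add: mult.assoc)
  have BHsums: "(\<lambda>n. (Bn (a - 1) * Hc) $ n * x ^ n) sums ((1 - x) powr (- (a - 1)) * (C * HF2))"
  proof -
    have "(\<lambda>k. \<Sum>i\<le>k. (Bn (a - 1) $ i * x ^ i) * (Hc $ (k - i) * x ^ (k - i)))
            sums ((\<Sum>k. Bn (a - 1) $ k * x ^ k) * (\<Sum>k. Hc $ k * x ^ k))"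
      by (rule Cauchy_product_sums[OF Bn_abs_summable[OF xlt] Hcabs])
    moreover have "(\<Sum>k. Bn (a - 1) $ k * x ^ k) = (1 - x) powr (- (a - 1))"
      using Bn_sums[OF xlt] by (simp add: sums_iff)
    moreover have "(\<Sum>i\<le>k. (Bn (a - 1) $ i * x ^ i) * (Hc $ (k - i) * x ^ (k - i))) = (Bn (a - 1) * Hc) $ k * x ^ k" for k
    proof -
      have "(\<Sum>i\<le>k. (Bn (a - 1) $ i * x ^ i) * (Hc $ (k - i) * x ^ (k - i)))
          = (\<Sum>i\<le>k. (Bn (a - 1) $ i * Hc $ (k - i)) * x ^ k)"
      proof (intro sum.cong refl)
        fix i assume "i \<in> {..k}"
        then have "x ^ i * x ^ (k - i) = x ^ k" by (simp add: power_add[symmetric])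
        then show "(Bn (a - 1) $ i * x ^ i) * (Hc $ (k - i) * x ^ (k - i)) = (Bn (a - 1) $ i * Hc $ (k - i)) * x ^ k"
          by (simp add: mult_ac)
      qed
      also have "\<dots> = (Bn (a - 1) * Hc) $ k * x ^ k"
        unfolding fps_mult_nth sum_distrib_right atLeast0AtMost ..
      finally show ?thesis .
    qed
    ultimately show ?thesis using Hcsum by simp
  qed
  have V0': "vpoch r f m \<noteq> 0" using V0 V_def by simp
  have Qn: "Qser $ n = (\<Sum>l<M. K l * (pochhammer a n / fact n * ff (of_nat n) l))" for n
  proof -
    have "Qser $ n = pochhammer a n / fact n * ((b+1) * (\<Sum>l<M. Y r l b f m * ff (of_nat n) l)
                 - b * (\<Sum>l<M. Y r l (b+1) f m * ff (of_nat n) l))"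
      unfolding Qser_def M_def Ysum_ff[OF V0'] by simp
    also have "\<dots> = (\<Sum>l<M. K l * (pochhammer a n / fact n * ff (of_nat n) l))"
      unfolding K_def sum_distrib_left sum_subtractf[symmetric]
      by (intro sum.cong refl) (simp add: algebra_simps)
    finally show ?thesis .
  qed
  have gsum: "(\<lambda>n. pochhammer a n / fact n * ff (of_nat n) l * x ^ n)
      sums (pochhammer a l * x ^ l * (1 - x) powr (- (a + of_nat l)))" for l
  proof -
    have "(\<lambda>i. (pochhammer a l * x ^ l) * (Bn (a + of_nat l) $ i * x ^ i))
        sums ((pochhammer a l * x ^ l) * (1 - x) powr (- (a + of_nat l)))"
      by (rule sums_mult[OF Bn_sums[OF xlt]])
    moreover have "(pochhammer a l * x ^ l) * (Bn (a + of_nat l) $ i * x ^ i)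
        = pochhammer a (i + l) / fact (i + l) * ff (of_nat (i + l)) l * x ^ (i + l)" for i
      unfolding g_shift Bn_nth by (simp add: power_add mult_ac)
    ultimately have "(\<lambda>i. pochhammer a (i + l) / fact (i + l) * ff (of_nat (i + l)) l * x ^ (i + l))
        sums (pochhammer a l * x ^ l * (1 - x) powr (- (a + of_nat l)))" by simp
    then show ?thesis
      by (subst (asm) sums_zero_iff_shift) (auto simp: ff_nat_gt)
  qed
  define Qsum where "Qsum = (\<Sum>l<M. K l * (pochhammer a l * x ^ l * (1 - x) powr (- (a + of_nat l))))"
  have Qsums: "(\<lambda>n. Qser $ n * x ^ n) sums Qsum"
  proof -
    have "(\<lambda>n. \<Sum>l<M. K l * (pochhammer a n / fact n * ff (of_nat n) l * x ^ n)) sums Qsum"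
      unfolding Qsum_def by (intro sums_sum sums_mult gsum)
    moreover have "(\<Sum>l<M. K l * (pochhammer a n / fact n * ff (of_nat n) l * x ^ n)) = Qser $ n * x ^ n" for n
      unfolding Qn sum_distrib_right by (simp add: mult_ac)
    ultimately show ?thesis by simp
  qed
  have Fsums: "(\<lambda>n. Fser $ n * x ^ n) sums (Qsum + (1 - x) powr (- (a - 1)) * (C * HF2))"
  proof -
    have "(\<lambda>n. Qser $ n * x ^ n + (Bn (a - 1) * Hc) $ n * x ^ n) sums (Qsum + (1 - x) powr (- (a - 1)) * (C * HF2))"
      by (rule sums_add[OF Qsums BHsums])
    then show ?thesis unfolding FPS by (simp add: distrib_right)
  qed
  have Pf0: "(\<Prod>i<r. pochhammer (f i) n) \<noteq> 0" for n
    using hf by (auto simp: prod_zero_iff pochhammer_eq_0_iff)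
  have Fterm: "prod_list (map (\<lambda>c. pochhammer c n) ([a, b] @ map (\<lambda>i. f i + of_nat (m i)) [0..<r]))
      / prod_list (map (\<lambda>c. pochhammer c n) ([b + 2] @ map f [0..<r])) * x ^ n / fact n = Fser $ n * x ^ n" for n
  proof -
    define Pfm where "Pfm = (\<Prod>i<r. pochhammer (f i + of_nat (m i)) n)"
    define Pf where "Pf = (\<Prod>i<r. pochhammer (f i) n)"
    have n1: "prod_list (map (\<lambda>c. pochhammer c n) ([a, b] @ map (\<lambda>i. f i + of_nat (m i)) [0..<r]))
        = pochhammer a n * (pochhammer b n * Pfm)"
      unfolding Pfm_def by (simp add: prod_list_upt o_def)
    have d1: "prod_list (map (\<lambda>c. pochhammer c n) ([b + 2] @ map f [0..<r])) = pochhammer (b+2) n * Pf"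
      unfolding Pf_def by (simp add: prod_list_upt o_def)
    have key: "Pfm * V = Pf * vpoch r (\<lambda>i. f i + of_nat n) m"
    proof -
      have "\<And>i. pochhammer (f i + of_nat (m i)) n * pochhammer (f i) (m i)
              = pochhammer (f i) n * pochhammer (f i + of_nat n) (m i)"
        using pochhammer_product'[of "f _" "m _" n] pochhammer_product'[of "f _" n "m _"]
        by (simp add: add.commute mult.commute)
      then show ?thesis unfolding Pfm_def Pf_def V_def vpoch_def prod.distrib[symmetric] by simp
    qed
    have Pf0': "Pf \<noteq> 0" using Pf0 Pf_def by simp
    have aux: "\<And>pa pb S Pfm Pf P F X. Pf \<noteq> 0 \<Longrightarrow> V \<noteq> 0 \<Longrightarrow> F \<noteq> 0 \<Longrightarrow> S \<noteq> 0 \<Longrightarrow> Pfm * V = Pf * P \<Longrightarrow>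
        pa * (pb * Pfm) / (S * Pf) * X / F = pa / F * (pb / S) * (P / V) * (X::complex)"
    proof -
      fix pa pb S Pfm Pf P F X :: complex
      assume *: "Pf \<noteq> 0" "V \<noteq> 0" "F \<noteq> 0" "S \<noteq> 0" "Pfm * V = Pf * P"
      then have "Pfm = Pf * P / V" by (simp add: field_simps)
      then show "pa * (pb * Pfm) / (S * Pf) * X / F = pa / F * (pb / S) * (P / V) * X"
        using * by (simp add: field_simps)
    qed
    show ?thesis
      unfolding n1 d1 Fser_def fps_nth_Abs_fps
      by (rule aux[OF Pf0' V0 fact_nonzero s key])
  qed
  have LHS: "hyperF ([a, b] @ map (\<lambda>i. f i + of_nat (m i)) [0..<r]) ([b + 2] @ map f [0..<r]) x
      = Qsum + (1 - x) powr (- (a - 1)) * (C * HF2)"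
    unfolding hyperF_def Fterm using Fsums by (simp add: sums_iff)
  have x1: "1 - x \<noteq> 0" using xlt by auto
  have pw1: "(1 - x) powr (a - 1) * (1 - x) powr (- (a - 1)) = 1"
    using x1 by (simp add: powr_add[symmetric])
  have pw1': "(1 - x) powr (1 - a) * (1 - x) powr (a - 1) = 1"
    using x1 by (simp add: powr_add[symmetric])
  have pw2: "(1 - x) powr (a - 1) * (1 - x) powr (- (a + of_nat l)) = 1 / (1 - x) ^ (l + 1)" for l
  proof -
    have "(1 - x) powr (a - 1) * (1 - x) powr (- (a + of_nat l)) = (1 - x) powr (- of_nat (l + 1))"
      by (simp add: powr_add[symmetric] algebra_simps)
    also have "\<dots> = 1 / (1 - x) ^ (l + 1)"
      using x1 powr_nat'[of "1 - x" "l + 1"] by (simp only: powr_minus_divide) simp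
    finally show ?thesis .
  qed
  have Ceq: "((b + 1) * vpoch r (\<lambda>i. f i - b) m - b * vpoch r (\<lambda>i. f i - b - 1) m) / vpoch r f m = C"
    unfolding C_def A_def B_def V_def by (simp add: diff_divide_distrib)
  have "(1 - x) powr (a - 1) * (Qsum + (1 - x) powr (- (a - 1)) * (C * HF2))
      = C * HF2 + (\<Sum>l<M. K l * (pochhammer a l * x ^ l * ((1 - x) powr (a - 1) * (1 - x) powr (- (a + of_nat l)))))"
    unfolding Qsum_def distrib_left sum_distrib_left
    using pw1' by (simp add: mult_ac)
  also have "\<dots> = C * HF2 + (\<Sum>l<M. K l * pochhammer a l * x ^ l / (1 - x) ^ (l + 1))"
    unfolding pw2 by (simp add: mult_ac)
  finally show ?thesis
    unfolding LHS Ceq HF2_def K_def .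
qed


end
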